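(* In the triangle $T_2$, every individual entry appears at the head (column $0$) of infinitely many rows: for every positive integer $x$ and every $c\in\{0,\dots,x-1\}$, the entry located in row $x$, column $c$ of $T_2$ occupies column $0$ of row $y$ for infinitely many $y$.
   Context: For a positive integer $m$, the triangle $T_m$ is an array whose row $x$ ($x=1,2,\dots$) has $x$ entries, in columns $0,\dots,x-1$. Row $1$ is the single entry $1$. For $x>1$, row $x$ is obtained from row $x-1$ by rotating it cyclically left by $m$ positions (the entry in column $c$ of row $x-1$ moves to column $(c-m)\bmod(x-1)\in\{0,\dots,x-2\}$ of row $x$), then appending in column $x-1$ a new entry equal to $1$ plus the entry in column $0$ of row $x-1$. Entries are regarded as individual objects keeping their identity as they move from row to row. Here $m=2$. *)

theory Defs
  imports Main
begin

text \<open>Row x of the triangle T_m, as the list (column 0 first) of the identities of its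
entries.  An entry is identified by the row in which it was created (it is appended
in the last column of that row); identities are distinct, so equality of identities
is equality of entries as objects.  The numeric values (1 + head of previous row) are
irrelevant for the statement, which only tracks entries as objects.
List.rotate m rotates left by m (cyclically, modulo the length), so the entry in
column c moves to column (c - m) mod (x-1).  Row 0 is an auxiliary empty row;
tri m 1 = [1].\<close>

fun tri :: "nat \<Rightarrow> nat \<Rightarrow> nat list" where
  "tri m 0 = []"
| "tri m (Suc n) = rotate m (tri m n) @ [Suc n]"

end

theory Submission
  imports Defs "HOL-Library.Infinite_Set"
begin

lemma len_tri[simp]: "length (tri m n) = n"
  by (induction n) auto

lemma step_tri:
  assumes "2 \<le> n" "p < n"
  shows "tri 2 (Suc n) ! ((p + n - 2) mod n) = tri 2 n ! p"
proof -
  have lt: "(p + n - 2) mod n < n" using assms by simp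
  have "((p + n - 2) mod n + 2) mod n = p"
  proof -
    have "((p + n - 2) mod n + 2) mod n = ((p + n - 2) + 2) mod n"
      by (rule mod_add_left_eq)
    also have "\<dots> = (p + n) mod n"
    proof -
      have h: "p + n - 2 + 2 = p + n" using assms by simp
      show ?thesis by (simp only: h)
    qed
    also have "\<dots> = p" using assms by simp
    finally show ?thesis .
  qed
  then show ?thesis using lt assms
    by (simp add: nth_append nth_rotate)
qed

lemma descend:
  assumes "2 \<le> n" "p < n" "2 * k \<le> p"
  shows "tri 2 (n + k) ! (p - 2 * k) = tri 2 n ! p"
  using assms(3)
proof (induction k)
  case 0 then show ?case by simp
next
  case (Suc k)
  have IH: "tri 2 (n + k) ! (p - 2 * k) = tri 2 n ! p" using Suc by simp
  have a: "2 \<le> n + k" "p - 2 * k < n + k" using assms Suc.prems by auto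
  have ee: "(p - 2 * k) + (n + k) - 2 = (p - 2 * Suc k) + (n + k)"
    using Suc.prems by simp
  have "p - 2 * Suc k < n + k" using assms by simp
  then have "((p - 2 * k) + (n + k) - 2) mod (n + k) = p - 2 * Suc k"
    unfolding ee by simp
  then show ?case using step_tri[OF a] IH by simp
qed

definition R :: "nat \<Rightarrow> nat \<Rightarrow> bool" where
  "R n p \<longleftrightarrow> (\<exists>y\<ge>n. tri 2 y ! 0 = tri 2 n ! p)"

lemma R_even:
  assumes "2 \<le> n" "p < n" "even p"
  shows "R n p"
proof -
  have "2 * (p div 2) \<le> p" by simp
  from descend[OF assms(1,2) this] assms(3)
  show ?thesis unfolding R_def by (intro exI[of _ "n + p div 2"]) auto
qed

lemma R_odd:
  assumes "2 \<le> n" "p < n" "odd p"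
  shows "tri 2 (n + p div 2) ! 1 = tri 2 n ! p"
proof -
  have "2 * (p div 2) \<le> p" by simp
  moreover have "p - 2 * (p div 2) = 1" using assms(3) by presburger
  ultimately show ?thesis using descend[OF assms(1,2), of "p div 2"] by (simp only:)
qed

lemma from1:
  assumes "2 \<le> r"
  shows "tri 2 (Suc r) ! (r - 1) = tri 2 r ! 1"
proof -
  have "(1 + r - 2) mod r = r - 1" using assms by simp
  then show ?thesis using step_tri[of r 1] assms by simp
qed

lemma R1_odd:
  assumes "2 \<le> r" "odd r"
  shows "R r 1"
proof -
  have "R (Suc r) (r - 1)" using assms by (intro R_even) auto
  then obtain y where y: "y \<ge> Suc r" "tri 2 y ! 0 = tri 2 (Suc r) ! (r - 1)"
    unfolding R_def by blast
  have "y \<ge> r" using y(1) by simp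
  moreover have "tri 2 y ! 0 = tri 2 r ! 1" using y(2) from1[OF assms(1)] by (simp only:)
  ultimately show ?thesis unfolding R_def by blast
qed

lemma R1_gen:
  "\<forall>r. 2 \<le> (r::nat) \<and> \<not> 2 ^ Suc e dvd r \<longrightarrow> R r 1"
proof (induction e)
  case 0
  then show ?case using R1_odd by auto
next
  case (Suc e)
  show ?case
  proof (intro allI impI)
    fix r :: nat assume r: "2 \<le> r \<and> \<not> 2 ^ Suc (Suc e) dvd r"
    show "R r 1"
    proof (cases "odd r")
      case True then show ?thesis using R1_odd r by auto
    next
      case False
      then obtain s where s: "r = 2 * s" by blast
      have s1: "1 \<le> s" using r s by simp
      have ns: "\<not> 2 ^ Suc e dvd s"
      proof
        assume "2 ^ Suc e dvd s"
        then have "2 * 2 ^ Suc e dvd 2 * s" by (rule mult_dvd_mono[OF dvd_refl])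
        then have "2 ^ Suc (Suc e) dvd r" using s by (simp only: power_Suc)
        with r show False by blast
      qed
      have n3: "\<not> 2 ^ Suc e dvd 3 * s"
      proof
        assume h: "2 ^ Suc e dvd 3 * s"
        have c23: "coprime (2::nat) 3" using coprime_Suc_right_nat[of 2] by (simp add: numeral_3_eq_3 numeral_2_eq_2)
        have "coprime ((2::nat) ^ Suc e) 3" by (rule coprime_power_left_iff[THEN iffD2]) (use c23 in blast)
        then have "2 ^ Suc e dvd s" using h coprime_dvd_mult_right_iff by blast
        with ns show False by blast
      qed
      have a1: "2 \<le> Suc r" using r by simp
      have a2: "r - 1 < Suc r" by simp
      have a3: "odd (r - 1)" using s s1 by presburger
      note a = a1 a2 a3
      have "tri 2 (Suc r + (r - 1) div 2) ! 1 = tri 2 (Suc r) ! (r - 1)" by (rule R_odd[OF a])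
      also have "\<dots> = tri 2 r ! 1" using from1 r by blast
      finally have e1: "tri 2 (Suc r + (r - 1) div 2) ! 1 = tri 2 r ! 1" .
      have eq: "Suc r + (r - 1) div 2 = 3 * s" using s s1 by presburger
      have "R (3 * s) 1" using Suc.IH n3 s1 by simp
      then obtain y where y: "y \<ge> 3 * s" "tri 2 y ! 0 = tri 2 (3 * s) ! 1"
        unfolding R_def by blast
      have "y \<ge> r" using y(1) s by simp
      moreover have e2: "tri 2 (3 * s) ! 1 = tri 2 r ! 1" using e1 eq by (simp only:)
      ultimately have "y \<ge> r \<and> tri 2 y ! 0 = tri 2 r ! 1" using y(2) by simp
      then show ?thesis unfolding R_def by blast
    qed
  qed
qed

lemma R1: "2 \<le> r \<Longrightarrow> R r 1"
proof -
  assume "2 \<le> r"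
  moreover have "\<not> 2 ^ Suc r dvd r"
  proof
    assume "2 ^ Suc r dvd r"
    then have "2 ^ Suc r \<le> r" using \<open>2 \<le> r\<close> by (simp add: dvd_imp_le)
    moreover have "r < 2 ^ r" by (rule less_exp)
    ultimately show False by simp
  qed
  ultimately show ?thesis using R1_gen by blast
qed

lemma Rall:
  assumes "2 \<le> n" "p < n"
  shows "R n p"
proof (cases "even p")
  case True then show ?thesis using R_even assms by auto
next
  case False
  have e: "tri 2 (n + p div 2) ! 1 = tri 2 n ! p" using R_odd assms False by auto
  have "R (n + p div 2) 1" using R1 assms by simp
  then obtain y where y: "y \<ge> n + p div 2" "tri 2 y ! 0 = tri 2 (n + p div 2) ! 1"
    unfolding R_def by blast
  have "y \<ge> n" using y(1) by simp
  moreover have "tri 2 y ! 0 = tri 2 n ! p" using y(2) e by (simp only:)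
  ultimately show ?thesis unfolding R_def by blast
qed

lemma head_again:
  assumes "2 \<le> n"
  shows "\<exists>y>n. tri 2 y ! 0 = tri 2 n ! 0"
proof -
  have "(0 + n - 2) mod n = n - 2" using assms by simp
  then have e: "tri 2 (Suc n) ! (n - 2) = tri 2 n ! 0" using step_tri[of n 0] assms by simp
  have "R (Suc n) (n - 2)" using Rall assms by simp
  then obtain y where y: "y \<ge> Suc n" "tri 2 y ! 0 = tri 2 (Suc n) ! (n - 2)"
    unfolding R_def by blast
  have "y > n" using y(1) by simp
  moreover have "tri 2 y ! 0 = tri 2 n ! 0" using y(2) e by (simp only:)
  ultimately show ?thesis by blast
qed

theorem mainTheorem4:
  fixes x c :: nat
  assumes "1 \<le> x" and "c < x"
  shows "infinite {y. 1 \<le> y \<and> tri 2 y ! 0 = tri 2 x ! c}"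
proof -
  define v where "v = tri 2 x ! c"
  obtain x' c' where xc: "2 \<le> x'" "c' < x'" "tri 2 x' ! c' = v"
  proof (cases "x = 1")
    case True
    then have "c = 0" using assms by simp
    have "tri 2 2 ! 0 = tri 2 1 ! 0" by (simp add: numeral_2_eq_2)
    then show ?thesis using that[of 2 0] True \<open>c = 0\<close> v_def by simp
  next
    case False
    then show ?thesis using that[of x c] assms v_def by simp
  qed
  obtain y0 where y0: "y0 \<ge> x'" "tri 2 y0 ! 0 = v" using Rall[OF xc(1,2)] xc(3) unfolding R_def by auto
  have unb: "\<forall>N. \<exists>y>N. y \<ge> 2 \<and> tri 2 y ! 0 = v"
  proof
    fix N
    show "\<exists>y>N. y \<ge> 2 \<and> tri 2 y ! 0 = v"
    proof (induction N)
      case 0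
      have "2 \<le> y0" using y0 xc by simp
      from head_again[OF this] obtain z where "z > y0" "tri 2 z ! 0 = tri 2 y0 ! 0" by blast
      then show ?case using \<open>2 \<le> y0\<close> y0(2) by (intro exI[of _ z]) simp
    next
      case (Suc N)
      then obtain y where y: "y > N" "y \<ge> 2" "tri 2 y ! 0 = v" by blast
      from head_again[OF y(2)] y(3) obtain z where "z > y" "tri 2 z ! 0 = v" by blast
      then show ?case using y by (intro exI[of _ z]) auto
    qed
  qed
  have "infinite {y. 1 \<le> y \<and> tri 2 y ! 0 = v}"
    unfolding infinite_nat_iff_unbounded
  proof
    fix N
    from unb obtain y where "y > N" "y \<ge> 2" "tri 2 y ! 0 = v" by blast
    then show "\<exists>n>N. n \<in> {y. 1 \<le> y \<and> tri 2 y ! 0 = v}" by auto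
  qed
  then show ?thesis using v_def by simp
qed

end
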